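(* Let $f:\mathbb{N}^k\to\mathbb{N}$ ($k\ge1$) be minimal. Then $f$ is bad.
   Context: $\mathbb{N}=\{0,1,2,\dots\}$. For $A\subseteq\mathbb{N}$, $\bar d(A)=\limsup_{n\to\infty}\frac{|A\cap[0,n)|}{n}$. $\mathscr{C}_{I_{\bar d=0}}$ is the set of all finitary functions $f:\mathbb{N}^k\to\mathbb{N}$ ($k\ge1$) such that $\bar d(f[A^k])=0$ whenever $\bar d(A)=0$. For $f:\mathbb{N}^k\to\mathbb{N}$, a permutation $\pi$ of $\{1,\dots,k\}$ and $\bar a=(a_1,\dots,a_\ell)\in\mathbb{N}^\ell$ with $0\le\ell<k$, the shadow $f_{\pi,\bar a}$ is the $(k-\ell)$-ary function $(y_1,\dots,y_{k-\ell})\mapsto f_\pi(a_1,\dots,a_\ell,y_1,\dots,y_{k-\ell})$, where $f_\pi(x_1,\dots,x_k)=f(x_{\pi(1)},\dots,x_{\pi(k)})$; it is proper if $\ell>0$. $f$ is minimal if $f\notin\mathscr{C}_{I_{\bar d=0}}$ and every proper shadow of $f$ lies in $\mathscr{C}_{I_{\bar d=0}}$. $f$ is bad if there exists a rational $\varepsilon>0$ such that for every $i\in\mathbb{N}$ there are $n,t\ge i$ and $A\subseteq[i,n)$ with $|A\cap[0,r)|\le\frac{r}{2^i}$ for all $r\in\mathbb{N}$ and $|f[A^k]\cap[0,t)|\ge\varepsilon t$. *)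

theory Defs
  imports "HOL-Analysis.Analysis" "HOL-Combinatorics.Permutations"
begin

text \<open>A k-ary function N^k -> N is represented by (k, f) with f :: nat list => nat,
  applied to lists of length k. Arguments are 0-indexed.\<close>

definition updens :: "nat set \<Rightarrow> ereal" where
  "updens A = limsup (\<lambda>n. ereal (real (card (A \<inter> {..<n})) / real n))"

definition img_pow :: "nat \<Rightarrow> (nat list \<Rightarrow> nat) \<Rightarrow> nat set \<Rightarrow> nat set" where
  "img_pow k f A = f ` {xs. length xs = k \<and> set xs \<subseteq> A}"

definition in_clone :: "nat \<Rightarrow> (nat list \<Rightarrow> nat) \<Rightarrow> bool" where
  "in_clone k f \<longleftrightarrow> 1 \<le> k \<and> (\<forall>A. updens A = 0 \<longrightarrow> updens (img_pow k f A) = 0)"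

definition permute_args :: "nat \<Rightarrow> (nat \<Rightarrow> nat) \<Rightarrow> (nat list \<Rightarrow> nat) \<Rightarrow> nat list \<Rightarrow> nat" where
  "permute_args k \<pi> f = (\<lambda>xs. f (map (\<lambda>i. xs ! \<pi> i) [0..<k]))"

definition shadow :: "nat \<Rightarrow> (nat list \<Rightarrow> nat) \<Rightarrow> (nat \<Rightarrow> nat) \<Rightarrow> nat list \<Rightarrow> nat list \<Rightarrow> nat" where
  "shadow k f \<pi> as = (\<lambda>ys. permute_args k \<pi> f (as @ ys))"

definition minimal_fn :: "nat \<Rightarrow> (nat list \<Rightarrow> nat) \<Rightarrow> bool" where
  "minimal_fn k f \<longleftrightarrow> \<not> in_clone k f \<and>
     (\<forall>\<pi> as. \<pi> permutes {..<k} \<and> 0 < length as \<and> length as < k \<longrightarrow>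
        in_clone (k - length as) (shadow k f \<pi> as))"

definition bad_fn :: "nat \<Rightarrow> (nat list \<Rightarrow> nat) \<Rightarrow> bool" where
  "bad_fn k f \<longleftrightarrow> (\<exists>\<epsilon>::rat. \<epsilon> > 0 \<and> (\<forall>i::nat. \<exists>n t A. n \<ge> i \<and> t \<ge> i \<and> A \<subseteq> {i..<n} \<and>
      (\<forall>r::nat. real (card (A \<inter> {..<r})) \<le> real r / 2 ^ i) \<and>
      real (card (img_pow k f A \<inter> {..<t})) \<ge> real_of_rat \<epsilon> * real t))"

end

theory Submission
  imports Defs
begin

definition D0 :: "nat set \<Rightarrow> bool" where
  "D0 X \<longleftrightarrow> (\<forall>e>0. eventually (\<lambda>n. real (card (X \<inter> {..<n})) \<le> e * real n) sequentially)"

lemma updens_D0: assumes "updens X = 0" shows "D0 X"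
  unfolding D0_def
proof (intro allI impI)
  fix e :: real assume e: "e > 0"
  have "ereal e > limsup (\<lambda>n. ereal (real (card (X \<inter> {..<n})) / real n))"
    using assms e unfolding updens_def by simp
  from Limsup_lessD[OF this]
  have "eventually (\<lambda>n. real (card (X \<inter> {..<n})) / real n < e) sequentially" by simp
  moreover have "eventually (\<lambda>n. n > (0::nat)) sequentially" by (rule eventually_gt_at_top)
  ultimately show "eventually (\<lambda>n. real (card (X \<inter> {..<n})) \<le> e * real n) sequentially"
    by eventually_elim (simp add: divide_less_eq mult.commute)
qed

lemma D0_updens: assumes "D0 X" shows "updens X = 0"
proof -
  let ?x = "\<lambda>n. ereal (real (card (X \<inter> {..<n})) / real n)"
  have "limsup ?x \<le> 0"
    unfolding Limsup_le_iff
  proof (intro allI impI)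
    fix y :: ereal assume y: "y > 0"
    show "eventually (\<lambda>n. y > ?x n) sequentially"
    proof (cases y)
      case (real r)
      with y have r: "r > 0" by simp
      have r2: "r/2 > 0" using r by simp
      have "eventually (\<lambda>n. real (card (X \<inter> {..<n})) \<le> (r/2) * real n) sequentially"
        using assms r2 unfolding D0_def by blast
      moreover have "eventually (\<lambda>n. n > (0::nat)) sequentially" by (rule eventually_gt_at_top)
      ultimately show ?thesis
      proof eventually_elim
        case (elim n)
        then have "real (card (X \<inter> {..<n})) / real n \<le> r/2" by (simp add: divide_le_eq)
        with r have "real (card (X \<inter> {..<n})) / real n < r" by linarith
        then show ?case using real by simp
      qed
    qed (use y in auto)
  qed
  moreover have "0 \<le> limsup ?x"
    by (rule le_Limsup) auto
  ultimately show ?thesis unfolding updens_def by simp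
qed

lemma D0_mono: "D0 Y \<Longrightarrow> X \<subseteq> Y \<Longrightarrow> D0 X"
  unfolding D0_def
proof (intro allI impI)
  fix e :: real assume "\<forall>e>0. eventually (\<lambda>n. real (card (Y \<inter> {..<n})) \<le> e * real n) sequentially" "X \<subseteq> Y" "e > 0"
  then have "eventually (\<lambda>n. real (card (Y \<inter> {..<n})) \<le> e * real n) sequentially" by simp
  then show "eventually (\<lambda>n. real (card (X \<inter> {..<n})) \<le> e * real n) sequentially"
  proof eventually_elim
    case (elim n)
    have "card (X \<inter> {..<n}) \<le> card (Y \<inter> {..<n})"
      by (rule card_mono) (use \<open>X \<subseteq> Y\<close> in auto)
    with elim show ?case by linarith
  qed
qed

lemma D0_Un: "D0 X \<Longrightarrow> D0 Y \<Longrightarrow> D0 (X \<union> Y)"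
  unfolding D0_def
proof (intro allI impI)
  fix e :: real assume a: "\<forall>e>0. eventually (\<lambda>n. real (card (X \<inter> {..<n})) \<le> e * real n) sequentially"
    "\<forall>e>0. eventually (\<lambda>n. real (card (Y \<inter> {..<n})) \<le> e * real n) sequentially" "e > 0"
  then have "eventually (\<lambda>n. real (card (X \<inter> {..<n})) \<le> (e/2) * real n) sequentially"
    "eventually (\<lambda>n. real (card (Y \<inter> {..<n})) \<le> (e/2) * real n) sequentially"
    using half_gt_zero[OF \<open>e>0\<close>] by blast+
  then show "eventually (\<lambda>n. real (card ((X \<union> Y) \<inter> {..<n})) \<le> e * real n) sequentially"
  proof eventually_elim
    case (elim n)
    have "card ((X \<union> Y) \<inter> {..<n}) \<le> card (X \<inter> {..<n}) + card (Y \<inter> {..<n})"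
      by (metis Int_Un_distrib2 card_Un_le)
    then have "real (card ((X \<union> Y) \<inter> {..<n})) \<le> real (card (X \<inter> {..<n})) + real (card (Y \<inter> {..<n}))"
      by linarith
    with elim show ?case by linarith
  qed
qed

lemma D0_empty: "D0 {}"
  unfolding D0_def by simp

lemma D0_UN: "finite I \<Longrightarrow> (\<And>i. i \<in> I \<Longrightarrow> D0 (S i)) \<Longrightarrow> D0 (\<Union>i\<in>I. S i)"
  by (induction I rule: finite_induct) (auto intro: D0_Un simp: D0_empty)

lemma D0_finite: assumes "finite X" shows "D0 X"
  unfolding D0_def
proof (intro allI impI)
  fix e :: real assume e: "e > 0"
  have "eventually (\<lambda>n. real n \<ge> real (card X) / e) sequentially"
    by (rule eventually_sequentiallyI[of "nat \<lceil>real (card X) / e\<rceil>"]) linarith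
  then show "eventually (\<lambda>n. real (card (X \<inter> {..<n})) \<le> e * real n) sequentially"
  proof eventually_elim
    case (elim n)
    have "card (X \<inter> {..<n}) \<le> card X" by (rule card_mono) (use assms in auto)
    moreover have "real (card X) \<le> e * real n" using elim e by (simp add: divide_le_eq mult.commute)
    ultimately show ?case by linarith
  qed
qed

lemma img_pow_mono: "X \<subseteq> Y \<Longrightarrow> img_pow k f X \<subseteq> img_pow k f Y"
  unfolding img_pow_def by auto

lemma finite_witness:
  assumes "finite T" "T \<subseteq> img_pow k f B"
  shows "\<exists>n. T \<subseteq> img_pow k f (B \<inter> {..<n})"
  using assms
proof (induction T rule: finite_induct)
  case empty then show ?case by auto
next
  case (insert y T)
  then obtain n where n: "T \<subseteq> img_pow k f (B \<inter> {..<n})" by auto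
  from insert obtain xs where xs: "length xs = k" "set xs \<subseteq> B" "y = f xs"
    unfolding img_pow_def by auto
  obtain m where m: "set xs \<subseteq> {..<m}" using finite_nat_bounded[of "set xs"] by auto
  have "T \<subseteq> img_pow k f (B \<inter> {..<max n m})"
  proof -
    have "img_pow k f (B \<inter> {..<n}) \<subseteq> img_pow k f (B \<inter> {..<max n m})"
      by (rule img_pow_mono) auto
    with n show ?thesis by auto
  qed
  moreover have "y \<in> img_pow k f (B \<inter> {..<max n m})"
  proof -
    have "set xs \<subseteq> B \<inter> {..<max n m}" using xs m by auto
    then show ?thesis using xs unfolding img_pow_def by (intro image_eqI[of y f xs]) auto
  qed
  ultimately show ?case by blast
qed

lemma shadow_cover:
  fixes f :: "nat list \<Rightarrow> nat" and xs :: "nat list" and k j :: nat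
  assumes xs: "length xs = k" "j < k"
  shows "f xs = shadow k f (Transposition.transpose 0 j) [xs ! j] (tl (map (\<lambda>l. xs ! Transposition.transpose 0 j l) [0..<k]))"
    and "set (tl (map (\<lambda>l. xs ! Transposition.transpose 0 j l) [0..<k])) \<subseteq> set xs"
    and "length (tl (map (\<lambda>l. xs ! Transposition.transpose 0 j l) [0..<k])) = k - 1"
proof -
  let ?p = "Transposition.transpose 0 j"
  define zs where "zs = map (\<lambda>l. xs ! ?p l) [0..<k]"
  have pk: "\<And>l. l < k \<Longrightarrow> ?p l < k" using xs by (auto simp: Transposition.transpose_def)
  have zs0: "zs = [xs ! j] @ tl zs"
  proof -
    have "zs \<noteq> []" using xs unfolding zs_def by auto
    moreover have "hd zs = xs ! j" using xs unfolding zs_def by (simp add: hd_map upt_rec)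
    ultimately show ?thesis by (cases zs) auto
  qed
  have "map (\<lambda>l. zs ! ?p l) [0..<k] = map (\<lambda>l. xs ! l) [0..<k]"
    using pk by (auto simp: zs_def)
  also have "\<dots> = xs" using xs(1) by (metis map_nth)
  finally have "f xs = f (map (\<lambda>l. zs ! ?p l) [0..<k])" by simp
  then show "f xs = shadow k f ?p [xs ! j] (tl zs)"
    unfolding shadow_def permute_args_def using zs0 by metis
  have "set zs \<subseteq> set xs" using pk xs by (auto simp: zs_def)
  then show "set (tl zs) \<subseteq> set xs" by (cases zs) auto
  show "length (tl zs) = k - 1" by (simp add: zs_def)
qed

lemma D0_E:
  assumes k: "1 \<le> k" and mf: "minimal_fn k f" and DA: "D0 A" and A0: "updens A = 0"
  shows "D0 (f ` {xs. length xs = k \<and> set xs \<subseteq> A \<and> (\<exists>j<k. xs ! j < M)})"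
proof (cases "k = 1")
  case True
  have "f ` {xs. length xs = k \<and> set xs \<subseteq> A \<and> (\<exists>j<k. xs ! j < M)} \<subseteq> f ` ((\<lambda>a. [a]) ` {..<M})"
  proof
    fix y assume "y \<in> f ` {xs. length xs = k \<and> set xs \<subseteq> A \<and> (\<exists>j<k. xs ! j < M)}"
    then obtain xs where "length xs = 1" "xs ! 0 < M" "y = f xs" using True by auto
    then show "y \<in> f ` ((\<lambda>a. [a]) ` {..<M})"
      by (cases xs) auto
  qed
  then show ?thesis by (rule D0_mono[OF D0_finite, rotated]) auto
next
  case False
  let ?S = "\<lambda>(j, a). img_pow (k - 1) (shadow k f (Transposition.transpose 0 j) [a]) A"
  have "D0 (\<Union>ja\<in>{..<k} \<times> {..<M}. ?S ja)"
  proof (rule D0_UN)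
    fix ja assume ja: "ja \<in> {..<k} \<times> {..<M}"
    obtain j a where [simp]: "ja = (j, a)" by fastforce
    have "Transposition.transpose 0 j permutes {..<k}" using ja k by (intro permutes_swap_id) auto
    moreover have H: "\<And>\<pi> as. \<pi> permutes {..<k} \<Longrightarrow> 0 < length as \<Longrightarrow> length as < k \<Longrightarrow> in_clone (k - length as) (shadow k f \<pi> as)"
      using mf unfolding minimal_fn_def by blast
    ultimately have "in_clone (k - length [a]) (shadow k f (Transposition.transpose 0 j) [a])"
      using False k by (intro H) simp_all
    then show "D0 (?S ja)" using A0 by (auto simp: in_clone_def intro: updens_D0)
  qed auto
  moreover have "f ` {xs. length xs = k \<and> set xs \<subseteq> A \<and> (\<exists>j<k. xs ! j < M)} \<subseteq> (\<Union>ja\<in>{..<k} \<times> {..<M}. ?S ja)"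
  proof
    fix y assume "y \<in> f ` {xs. length xs = k \<and> set xs \<subseteq> A \<and> (\<exists>j<k. xs ! j < M)}"
    then obtain xs j where xs: "length xs = k" "set xs \<subseteq> A" "j < k" "xs ! j < M" "y = f xs" by auto
    note sc1 = shadow_cover(1)[of xs k j f, OF xs(1,3)] and sc2 = shadow_cover(2,3)[OF xs(1,3)]
    have "f xs \<in> shadow k f (Transposition.transpose 0 j) [xs ! j] ` {ys. length ys = k - 1 \<and> set ys \<subseteq> A}"
      by (rule image_eqI, rule sc1) (use sc2 xs in auto)
    then have "y \<in> ?S (j, xs ! j)" using xs(5) by (simp add: img_pow_def)
    then show "y \<in> (\<Union>ja\<in>{..<k} \<times> {..<M}. ?S ja)" using xs by blast
  qed
  ultimately show ?thesis by (rule D0_mono)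
qed

theorem mainTheorem5:
  fixes k :: nat and f :: "nat list \<Rightarrow> nat"
  assumes "1 \<le> k" and "minimal_fn k f"
  shows "bad_fn k f"
proof -
  have "\<not> in_clone k f" using assms(2) unfolding minimal_fn_def by simp
  then obtain A where A0: "updens A = 0" and nz: "updens (img_pow k f A) \<noteq> 0"
    using assms(1) unfolding in_clone_def by auto
  have DA: "D0 A" using A0 by (rule updens_D0)
  have "\<not> D0 (img_pow k f A)" using nz D0_updens by blast
  then obtain e :: real where e: "e > 0"
    and fr: "frequently (\<lambda>t. \<not> real (card (img_pow k f A \<inter> {..<t})) \<le> e * real t) sequentially"
    unfolding D0_def by (auto simp: frequently_def)
  obtain q :: rat where q: "0 < real_of_rat q" "real_of_rat q < e / 2"
    using of_rat_dense[of 0 "e/2"] e by auto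
  show ?thesis
    unfolding bad_fn_def
  proof (intro exI[of _ q] conjI allI)
    show "q > 0" using q(1) by simp
    fix i :: nat
    have "(1 / 2 ^ i :: real) > 0" by simp
    then have "eventually (\<lambda>r. real (card (A \<inter> {..<r})) \<le> (1 / 2 ^ i) * real r) sequentially"
      using DA unfolding D0_def by blast
    then obtain N where N: "\<And>r. r \<ge> N \<Longrightarrow> real (card (A \<inter> {..<r})) \<le> (1 / 2 ^ i) * real r"
      unfolding eventually_sequentially by blast
    define M where "M = max i N"
    define B where "B = A - {..<M}"
    define E where "E = f ` {xs. length xs = k \<and> set xs \<subseteq> A \<and> (\<exists>j<k. xs ! j < M)}"
    have DE: "D0 E" unfolding E_def by (rule D0_E[OF assms DA A0])
    have cover: "img_pow k f A \<subseteq> img_pow k f B \<union> E"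
    proof
      fix y assume "y \<in> img_pow k f A"
      then obtain xs where xs: "length xs = k" "set xs \<subseteq> A" "y = f xs" unfolding img_pow_def by auto
      show "y \<in> img_pow k f B \<union> E"
      proof (cases "\<exists>j<k. xs ! j < M")
        case True then show ?thesis using xs unfolding E_def by auto
      next
        case False
        then have "set xs \<subseteq> B" using xs unfolding B_def by (auto simp: in_set_conv_nth)
        then show ?thesis using xs unfolding img_pow_def by auto
      qed
    qed
    have "e / 2 > 0" using e by simp
    then have evE: "eventually (\<lambda>t. real (card (E \<inter> {..<t})) \<le> (e/2) * real t) sequentially"
      using DE unfolding D0_def by blast
    have evi: "eventually (\<lambda>t. t \<ge> i) sequentially" by (rule eventually_ge_at_top)
    have "frequently (\<lambda>t. \<not> real (card (img_pow k f A \<inter> {..<t})) \<le> e * real t \<and>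
            (real (card (E \<inter> {..<t})) \<le> (e/2) * real t \<and> t \<ge> i)) sequentially"
      by (rule frequently_eventually_frequently[OF fr eventually_conj[OF evE evi]])
    then have "\<exists>t. \<not> real (card (img_pow k f A \<inter> {..<t})) \<le> e * real t \<and>
            (real (card (E \<inter> {..<t})) \<le> (e/2) * real t \<and> t \<ge> i)" by (rule frequently_ex)
    then obtain t where t1': "\<not> real (card (img_pow k f A \<inter> {..<t})) \<le> e * real t"
      and t2: "real (card (E \<inter> {..<t})) \<le> (e/2) * real t" and t3: "t \<ge> i"
      by blast
    from t1' have t1: "real (card (img_pow k f A \<inter> {..<t})) > e * real t" by linarith
    define T where "T = img_pow k f B \<inter> {..<t}"
    have "card (img_pow k f A \<inter> {..<t}) \<le> card (T \<union> (E \<inter> {..<t}))"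
      by (rule card_mono) (use cover in \<open>auto simp: T_def\<close>)
    also have "\<dots> \<le> card T + card (E \<inter> {..<t})" by (rule card_Un_le)
    finally have "real (card (img_pow k f A \<inter> {..<t})) \<le> real (card T) + real (card (E \<inter> {..<t}))"
      by linarith
    moreover have "real_of_rat q * real t \<le> (e/2) * real t" using q(2) by (intro mult_right_mono) auto
    ultimately have cT: "real (card T) \<ge> real_of_rat q * real t"
      using t1 t2 by linarith
    have "finite T" "T \<subseteq> img_pow k f B" by (auto simp: T_def)
    from finite_witness[OF this] obtain n where n: "T \<subseteq> img_pow k f (B \<inter> {..<n})" by blast
    define n0 where "n0 = max n i"
    define A' where "A' = B \<inter> {..<n0}"
    have "T \<subseteq> img_pow k f A'"
    proof -
      have "img_pow k f (B \<inter> {..<n}) \<subseteq> img_pow k f A'"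
        unfolding A'_def n0_def by (rule img_pow_mono) auto
      with n show ?thesis by auto
    qed
    then have "T \<subseteq> img_pow k f A' \<inter> {..<t}" by (auto simp: T_def)
    then have "card T \<le> card (img_pow k f A' \<inter> {..<t})" by (intro card_mono) auto
    with cT have fin: "real (card (img_pow k f A' \<inter> {..<t})) \<ge> real_of_rat q * real t" by linarith
    have sub: "A' \<subseteq> {i..<n0}" unfolding A'_def B_def M_def by auto
    have dens: "real (card (A' \<inter> {..<r})) \<le> real r / 2 ^ i" for r
    proof (cases "r \<le> M")
      case True
      then have "A' \<inter> {..<r} = {}" unfolding A'_def B_def by auto
      then show ?thesis by simp
    next
      case False
      then have "r \<ge> N" unfolding M_def by simp
      have "card (A' \<inter> {..<r}) \<le> card (A \<inter> {..<r})"
        by (rule card_mono) (auto simp: A'_def B_def)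
      with N[OF \<open>r \<ge> N\<close>] show ?thesis by simp
    qed
    show "\<exists>n t A. n \<ge> i \<and> t \<ge> i \<and> A \<subseteq> {i..<n} \<and>
      (\<forall>r::nat. real (card (A \<inter> {..<r})) \<le> real r / 2 ^ i) \<and>
      real (card (img_pow k f A \<inter> {..<t})) \<ge> real_of_rat q * real t"
    proof (rule exI[of _ n0], rule exI[of _ t], rule exI[of _ A'], intro conjI allI)
      show "n0 \<ge> i" by (simp add: n0_def)
    qed (use sub dens fin t3 in auto)
  qed
qed

end
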